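(* Let $(\Omega,\mathcal F,\mathbb P)$ be an atomless probability space and $\mathcal X$ the set of all random variables on it. Let $X\in\mathcal X$ be continuously distributed, let $n\ge1$, $\alpha_1,\dots,\alpha_n>0$ with $\sum_{i=1}^n\alpha_i<1$, and $\beta\in[0,1]$. Define $V_\beta(X)=\inf\Big\{\sum_{i=1}^n\mathrm Q_{\alpha_i}(X_i): (X_1,\dots,X_n)\in\mathcal X^n,\ \sum_{i=1}^nX_i\ge X,\ X_i\uparrow_\beta X \text{ for } i=1,\dots,n\Big\}.$ Then $V_\beta(X)=\mathrm Q_\gamma(X)$, where $\gamma=\beta\wedge\big(\bigvee_{i=1}^n\alpha_i\big)+\sum_{i=1}^n(\alpha_i-\beta)_+$.
   Context: For $\alpha\in(0,1)$ and $Y\in\mathcal X$, $\mathrm Q_\alpha(Y)=\inf\{x\in\mathbb R:\mathbb P(Y\le x)\ge1-\alpha\}$ (the left $(1-\alpha)$-quantile). For $p\in[0,1)$, $\mathrm{VaR}_p(Z)=\inf\{x\in\mathbb R:\mathbb P(Z\le x)>p\}$, $A^Z_p=\{\omega: Z(\omega)>\mathrm{VaR}_p(Z)\}$ and $\mathcal P^Z_p=\{\delta_\omega\times\delta_{\omega'}:\omega\in A^Z_p,\ \omega'\in(A^Z_p)^c\}$. For random variables $Y,Z$, $Y\uparrow_\beta Z$ means that $Y$ and $Z$ are weakly comonotonic with respect to $\bigcup_{p\in[1-\beta,1)}\mathcal P^Z_p$, i.e. (for some representatives of the a.s.-classes of $Y,Z$) $(Y(\omega)-Y(\omega'))(Z(\omega)-Z(\omega'))\ge0$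 for all $p\in[1-\beta,1)$, $\omega\in A^Z_p$, $\omega'\notin A^Z_p$. (For $\beta=0$ this is no constraint.) Random variables equal a.s. are identified; $a\wedge b=\min(a,b)$, $\bigvee$ denotes maximum, $x_+=\max(x,0)$. *)

theory Defs
  imports "HOL-Probability.Probability"
begin

definition atomless :: "'a measure \<Rightarrow> bool" where
  "atomless M \<longleftrightarrow> (\<forall>A\<in>sets M. measure M A > 0 \<longrightarrow>
      (\<exists>B\<in>sets M. B \<subseteq> A \<and> 0 < measure M B \<and> measure M B < measure M A))"

definition cont_distributed :: "'a measure \<Rightarrow> ('a \<Rightarrow> real) \<Rightarrow> bool" where
  "cont_distributed M X \<longleftrightarrow> (\<forall>x. measure M {\<omega>\<in>space M. X \<omega> = x} = 0)"

definition Qa :: "'a measure \<Rightarrow> real \<Rightarrow> ('a \<Rightarrow> real) \<Rightarrow> real" where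
  "Qa M \<alpha> Y = Inf {x. measure M {\<omega>\<in>space M. Y \<omega> \<le> x} \<ge> 1 - \<alpha>}"

definition VaR :: "'a measure \<Rightarrow> real \<Rightarrow> ('a \<Rightarrow> real) \<Rightarrow> real" where
  "VaR M p Z = Inf {x. measure M {\<omega>\<in>space M. Z \<omega> \<le> x} > p}"

definition Aset :: "'a measure \<Rightarrow> real \<Rightarrow> ('a \<Rightarrow> real) \<Rightarrow> 'a set" where
  "Aset M p Z = {\<omega>\<in>space M. Z \<omega> > VaR M p Z}"

text \<open>\<open>Y \<uparrow>_\<beta> Z\<close>: weak comonotonicity w.r.t. the union of the \<open>P^Z_p\<close>, p in [1-beta,1),
  for some representatives of the a.s.-classes of Y and Z.\<close>
definition wcomon :: "'a measure \<Rightarrow> real \<Rightarrow> ('a \<Rightarrow> real) \<Rightarrow> ('a \<Rightarrow> real) \<Rightarrow> bool" where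
  "wcomon M \<beta> Y Z \<longleftrightarrow> (\<exists>Y' Z'. Y' \<in> borel_measurable M \<and> Z' \<in> borel_measurable M \<and>
      (AE \<omega> in M. Y' \<omega> = Y \<omega>) \<and> (AE \<omega> in M. Z' \<omega> = Z \<omega>) \<and>
      (\<forall>p. 1 - \<beta> \<le> p \<and> p < 1 \<longrightarrow>
         (\<forall>\<omega>\<in>Aset M p Z'. \<forall>\<omega>'\<in>space M - Aset M p Z'.
            (Y' \<omega> - Y' \<omega>') * (Z' \<omega> - Z' \<omega>') \<ge> 0)))"

definition Vbeta :: "'a measure \<Rightarrow> nat \<Rightarrow> (nat \<Rightarrow> real) \<Rightarrow> real \<Rightarrow> ('a \<Rightarrow> real) \<Rightarrow> ereal" where
  "Vbeta M n \<alpha> \<beta> X = Inf {ereal (\<Sum>i<n. Qa M (\<alpha> i) (Xs i)) | Xs.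
      (\<forall>i<n. Xs i \<in> borel_measurable M) \<and>
      (AE \<omega> in M. (\<Sum>i<n. Xs i \<omega>) \<ge> X \<omega>) \<and>
      (\<forall>i<n. wcomon M \<beta> (Xs i) X)}"

end

theory Submission
  imports Defs
begin


context prob_space begin

lemma cdfY_eq:
  fixes Y :: "'a \<Rightarrow> real"
  assumes Y: "Y \<in> borel_measurable M"
  shows "measure M {\<omega>\<in>space M. Y \<omega> \<le> x} = cdf (distr M borel Y) x"
proof -
  have "cdf (distr M borel Y) x = measure M (Y -` {..x} \<inter> space M)"
    unfolding cdf_def using Y by (simp add: measure_distr)
  also have "Y -` {..x} \<inter> space M = {\<omega>\<in>space M. Y \<omega> \<le> x}" by auto
  finally show ?thesis by simp
qed

lemma cdfY_props:
  fixes Y :: "'a \<Rightarrow> real"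
  assumes Y: "Y \<in> borel_measurable M"
  defines "F \<equiv> (\<lambda>x. measure M {\<omega>\<in>space M. Y \<omega> \<le> x})"
  shows "mono F" "(F \<longlongrightarrow> 1) at_top" "(F \<longlongrightarrow> 0) at_bot"
    "\<And>a. continuous (at_right a) F"
proof -
  interpret D: real_distribution "distr M borel Y" using Y by simp
  have FF: "F = cdf (distr M borel Y)" unfolding F_def using cdfY_eq[OF Y] by auto
  show "mono F" unfolding FF by (simp add: D.cdf_nondecreasing monoI)
  show "(F \<longlongrightarrow> 1) at_top" unfolding FF by (rule D.cdf_lim_at_top_prob)
  show "(F \<longlongrightarrow> 0) at_bot" unfolding FF by (rule D.cdf_lim_at_bot)
  show "\<And>a. continuous (at_right a) F" unfolding FF by (rule D.cdf_is_right_cont)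
qed

lemma cdfY_cont:
  fixes Y :: "'a \<Rightarrow> real"
  assumes Y: "Y \<in> borel_measurable M" and c: "cont_distributed M Y"
  shows "isCont (\<lambda>x. measure M {\<omega>\<in>space M. Y \<omega> \<le> x}) a"
proof -
  interpret D: real_distribution "distr M borel Y" using Y by simp
  have FF: "(\<lambda>x. measure M {\<omega>\<in>space M. Y \<omega> \<le> x}) = cdf (distr M borel Y)" using cdfY_eq[OF Y] by auto
  have "measure (distr M borel Y) {a} = measure M (Y -` {a} \<inter> space M)"
    using Y by (simp add: measure_distr)
  also have "Y -` {a} \<inter> space M = {\<omega>\<in>space M. Y \<omega> = a}" by auto
  finally have "measure (distr M borel Y) {a} = 0" using c unfolding cont_distributed_def by simp
  then show ?thesis unfolding FF using D.isCont_cdf by simp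
qed

end

lemma inf_set_props:
  fixes F :: "real \<Rightarrow> real"
  assumes mono: "mono F" and top: "(F \<longlongrightarrow> 1) at_top" and bot: "(F \<longlongrightarrow> 0) at_bot"
    and r: "0 < r" "r < 1"
    and S1: "\<And>x. x \<in> S \<Longrightarrow> r \<le> F x" and S2: "\<And>x. r < F x \<Longrightarrow> x \<in> S"
  shows "S \<noteq> {}" "bdd_below S"
proof -
  have "eventually (\<lambda>x. F x > r) at_top" using top r by (simp add: order_tendstoD)
  then obtain x where "F x > r" by (metis eventually_False trivial_limit_at_top_linorder eventually_mono)
  then show "S \<noteq> {}" using S2 by auto
  have "eventually (\<lambda>x. F x < r) at_bot" using bot r by (simp add: order_tendstoD)
  then obtain b where b: "\<And>x. x \<le> b \<Longrightarrow> F x < r" by (auto simp: eventually_at_bot_linorder)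
  show "bdd_below S"
  proof (rule bdd_belowI)
    fix x assume "x \<in> S" then have "r \<le> F x" by (rule S1)
    then have "\<not> x < b" using b[of x] by auto
    then show "b \<le> x" by simp
  qed
qed

lemma inf_set_ge:
  fixes F :: "real \<Rightarrow> real"
  assumes mono: "mono F" and rc: "continuous (at_right (Inf S)) F"
    and ne: "S \<noteq> {}" and bdd: "bdd_below S" and S1: "\<And>x. x \<in> S \<Longrightarrow> r \<le> F x"
  shows "r \<le> F (Inf S)"
proof -
  have lim: "(F \<longlongrightarrow> F (Inf S)) (at_right (Inf S))" using rc
    by (simp add: continuous_within)
  have "eventually (\<lambda>x. r \<le> F x) (at_right (Inf S))"
  proof -
    have *: "\<forall>x. x > Inf S \<longrightarrow> r \<le> F x"
    proof (intro allI impI)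
      fix x assume "x > Inf S"
      then obtain y where "y \<in> S" "y < x" using ne bdd by (meson cInf_lessD)
      then show "r \<le> F x" using S1 mono by (meson less_imp_le monoD order_trans)
    qed
    show ?thesis by (rule eventually_mono[OF eventually_at_right_less]) (use * in auto)
  qed
  then show ?thesis using lim by (intro tendsto_lowerbound) auto
qed

lemma inf_set_le:
  fixes F :: "real \<Rightarrow> real"
  assumes c: "isCont F (Inf S)" and bdd: "bdd_below S" and S2: "\<And>x. r < F x \<Longrightarrow> x \<in> S"
  shows "F (Inf S) \<le> r"
proof -
  have lim: "(F \<longlongrightarrow> F (Inf S)) (at_left (Inf S))" using c
    by (simp add: isCont_def filterlim_at_split)
  have "\<forall>x. x < Inf S \<longrightarrow> F x \<le> r"
    using S2 bdd by (meson cInf_lower leD not_le)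
  then have "eventually (\<lambda>x. F x \<le> r) (at_left (Inf S))"
    unfolding eventually_at_left_field by (intro exI[of _ "Inf S - 1"]) auto
  then show ?thesis using lim by (intro tendsto_upperbound) auto
qed


context prob_space begin

lemma Qa_set_props:
  fixes Y :: "'a \<Rightarrow> real"
  assumes Y: "Y \<in> borel_measurable M" and a: "0 < a" "a < 1"
  shows "{x. measure M {\<omega>\<in>space M. Y \<omega> \<le> x} \<ge> 1 - a} \<noteq> {}"
    "bdd_below {x. measure M {\<omega>\<in>space M. Y \<omega> \<le> x} \<ge> 1 - a}"
  using inf_set_props[OF cdfY_props(1-3)[OF Y], of "1-a" "{x. measure M {\<omega>\<in>space M. Y \<omega> \<le> x} \<ge> 1 - a}"] a by auto

lemma VaR_set_props:
  fixes Y :: "'a \<Rightarrow> real"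
  assumes Y: "Y \<in> borel_measurable M" and a: "0 < p" "p < 1"
  shows "{x. measure M {\<omega>\<in>space M. Y \<omega> \<le> x} > p} \<noteq> {}"
    "bdd_below {x. measure M {\<omega>\<in>space M. Y \<omega> \<le> x} > p}"
  using inf_set_props[OF cdfY_props(1-3)[OF Y], of "p" "{x. measure M {\<omega>\<in>space M. Y \<omega> \<le> x} > p}"] a by auto

lemma Qa_le:
  fixes Y :: "'a \<Rightarrow> real"
  assumes Y: "Y \<in> borel_measurable M" and a: "0 < a" "a < 1"
    and x: "measure M {\<omega>\<in>space M. Y \<omega> \<le> x} \<ge> 1 - a"
  shows "Qa M a Y \<le> x"
  unfolding Qa_def using Qa_set_props[OF Y a] x by (intro cInf_lower) auto

lemma Qa_ge:
  fixes Y :: "'a \<Rightarrow> real"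
  assumes Y: "Y \<in> borel_measurable M" and a: "0 < a" "a < 1"
  shows "1 - a \<le> measure M {\<omega>\<in>space M. Y \<omega> \<le> Qa M a Y}"
  unfolding Qa_def using Qa_set_props[OF Y a]
  by (intro inf_set_ge[OF cdfY_props(1,4)[OF Y]]) auto

lemma Qa_tail:
  fixes Y :: "'a \<Rightarrow> real"
  assumes Y: "Y \<in> borel_measurable M" and a: "0 < a" "a < 1"
  shows "measure M {\<omega>\<in>space M. Y \<omega> > Qa M a Y} \<le> a"
proof -
  have "{\<omega>\<in>space M. Y \<omega> > Qa M a Y} = space M - {\<omega>\<in>space M. Y \<omega> \<le> Qa M a Y}" by auto
  then have "measure M {\<omega>\<in>space M. Y \<omega> > Qa M a Y} = 1 - measure M {\<omega>\<in>space M. Y \<omega> \<le> Qa M a Y}"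
    using Y by (simp add: prob_compl)
  then show ?thesis using Qa_ge[OF Y a] by simp
qed

lemma Qa_gt:
  fixes Y :: "'a \<Rightarrow> real"
  assumes Y: "Y \<in> borel_measurable M" and a: "0 < a" "a < 1" and s: "s < Qa M a Y"
  shows "measure M {\<omega>\<in>space M. Y \<omega> > s} > a"
proof -
  have "\<not> measure M {\<omega>\<in>space M. Y \<omega> \<le> s} \<ge> 1 - a" using Qa_le[OF Y a, of s] s by auto
  moreover have "{\<omega>\<in>space M. Y \<omega> > s} = space M - {\<omega>\<in>space M. Y \<omega> \<le> s}" by auto
  then have "measure M {\<omega>\<in>space M. Y \<omega> > s} = 1 - measure M {\<omega>\<in>space M. Y \<omega> \<le> s}"
    using Y by (simp add: prob_compl)
  ultimately show ?thesis by simp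
qed

lemma Qa_cont:
  fixes Y :: "'a \<Rightarrow> real"
  assumes Y: "Y \<in> borel_measurable M" and c: "cont_distributed M Y" and a: "0 < a" "a < 1"
  shows "measure M {\<omega>\<in>space M. Y \<omega> \<le> Qa M a Y} = 1 - a"
proof -
  have "measure M {\<omega>\<in>space M. Y \<omega> \<le> Qa M a Y} \<le> 1 - a"
    unfolding Qa_def using Qa_set_props[OF Y a]
    by (intro inf_set_le[OF cdfY_cont[OF Y c]]) auto
  then show ?thesis using Qa_ge[OF Y a] by simp
qed

lemma VaR_cont:
  fixes Y :: "'a \<Rightarrow> real"
  assumes Y: "Y \<in> borel_measurable M" and c: "cont_distributed M Y" and a: "0 < p" "p < 1"
  shows "measure M {\<omega>\<in>space M. Y \<omega> \<le> VaR M p Y} = p"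
proof -
  have "measure M {\<omega>\<in>space M. Y \<omega> \<le> VaR M p Y} \<le> p"
    unfolding VaR_def using VaR_set_props[OF Y a]
    by (intro inf_set_le[OF cdfY_cont[OF Y c]]) auto
  moreover have "p \<le> measure M {\<omega>\<in>space M. Y \<omega> \<le> VaR M p Y}"
    unfolding VaR_def using VaR_set_props[OF Y a]
    by (intro inf_set_ge[OF cdfY_props(1,4)[OF Y]]) auto
  ultimately show ?thesis by simp
qed

lemma Aset_sets:
  fixes Y :: "'a \<Rightarrow> real"
  assumes Y: "Y \<in> borel_measurable M"
  shows "Aset M p Y \<in> sets M"
  unfolding Aset_def using Y by measurable

lemma Aset_measure:
  fixes Y :: "'a \<Rightarrow> real"
  assumes Y: "Y \<in> borel_measurable M" and c: "cont_distributed M Y" and a: "0 < p" "p < 1"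
  shows "measure M (Aset M p Y) = 1 - p"
proof -
  have "Aset M p Y = space M - {\<omega>\<in>space M. Y \<omega> \<le> VaR M p Y}" unfolding Aset_def by auto
  then show ?thesis using VaR_cont[OF Y c a] Y by (simp add: prob_compl)
qed

lemma VaR_mono:
  fixes Y :: "'a \<Rightarrow> real"
  assumes Y: "Y \<in> borel_measurable M" and a: "0 < p" "p \<le> p'" "p' < 1"
  shows "VaR M p Y \<le> VaR M p' Y"
  unfolding VaR_def
proof (rule cInf_greatest)
  show "{x. p' < measure M {\<omega> \<in> space M. Y \<omega> \<le> x}} \<noteq> {}" using VaR_set_props[OF Y, of p'] a by auto
  fix x assume "x \<in> {x. p' < measure M {\<omega> \<in> space M. Y \<omega> \<le> x}}"
  then show "Inf {x. p < measure M {\<omega> \<in> space M. Y \<omega> \<le> x}} \<le> x"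
    using VaR_set_props[OF Y, of p] a by (intro cInf_lower) auto
qed

lemma Qa_le_VaR:
  fixes Y :: "'a \<Rightarrow> real"
  assumes Y: "Y \<in> borel_measurable M" and a: "0 < a" "a < 1"
  shows "Qa M a Y \<le> VaR M (1 - a) Y"
  unfolding VaR_def
proof (rule cInf_greatest)
  show "{x. 1 - a < measure M {\<omega> \<in> space M. Y \<omega> \<le> x}} \<noteq> {}" using VaR_set_props[OF Y, of "1-a"] a by auto
  fix x assume "x \<in> {x. 1 - a < measure M {\<omega> \<in> space M. Y \<omega> \<le> x}}"
  then show "Qa M a Y \<le> x" by (intro Qa_le[OF Y a]) auto
qed

end




lemma gamma_facts:
  fixes \<alpha> :: "nat \<Rightarrow> real"
  assumes n: "n \<ge> 1" and pos: "\<forall>i<n. \<alpha> i > 0" and sum: "(\<Sum>i<n. \<alpha> i) < 1" and b: "0 \<le> \<beta>"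
  obtains i1 where "i1 < n" "\<alpha> i1 = Max (\<alpha> ` {..<n})"
    "\<And>i. i < n \<Longrightarrow> \<alpha> i \<le> Max (\<alpha> ` {..<n})"
    "\<And>i. i < n \<Longrightarrow> \<alpha> i < 1"
    "0 < Max (\<alpha> ` {..<n})"
    "Max (\<alpha> ` {..<n}) \<le> min \<beta> (Max (\<alpha> ` {..<n})) + (\<Sum>i<n. max (\<alpha> i - \<beta>) 0)"
    "min \<beta> (Max (\<alpha> ` {..<n})) + (\<Sum>i<n. max (\<alpha> i - \<beta>) 0) < 1"
proof -
  let ?M = "Max (\<alpha> ` {..<n})"
  have "\<alpha> 0 \<in> \<alpha> ` {..<n}" using n by auto
  then have ne: "\<alpha> ` {..<n} \<noteq> {}" by auto
  obtain i1 where i1: "i1 < n" "\<alpha> i1 = ?M" using Max_in[OF _ ne] by auto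
  have le: "\<And>i. i < n \<Longrightarrow> \<alpha> i \<le> ?M" by (simp add: Max_ge)
  have lt1: "\<And>i. i < n \<Longrightarrow> \<alpha> i < 1"
  proof -
    fix i assume i: "i < n"
    have "\<alpha> i \<le> (\<Sum>i<n. \<alpha> i)" using i pos by (intro member_le_sum) auto
    then show "\<alpha> i < 1" using sum by simp
  qed
  have Mpos: "0 < ?M" using i1 pos by auto
  have fin: "finite {..<n}" by simp
  have s1: "(\<Sum>i<n. max (\<alpha> i - \<beta>) 0) = max (\<alpha> i1 - \<beta>) 0 + (\<Sum>i\<in>{..<n}-{i1}. max (\<alpha> i - \<beta>) 0)"
    using i1 by (subst sum.remove[OF fin, of i1]) auto
  have s2: "(\<Sum>i<n. \<alpha> i) = \<alpha> i1 + (\<Sum>i\<in>{..<n}-{i1}. \<alpha> i)"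
    using i1 by (subst sum.remove[OF fin, of i1]) auto
  have mm: "min \<beta> ?M + max (\<alpha> i1 - \<beta>) 0 = ?M" using i1 by (simp add: min_def max_def)
  have ge0: "0 \<le> (\<Sum>i\<in>{..<n}-{i1}. max (\<alpha> i - \<beta>) 0)" by (intro sum_nonneg) auto
  have lesum: "(\<Sum>i\<in>{..<n}-{i1}. max (\<alpha> i - \<beta>) 0) \<le> (\<Sum>i\<in>{..<n}-{i1}. \<alpha> i)"
    using pos b by (intro sum_mono) auto
  show ?thesis
    apply (rule that[OF i1 le lt1 Mpos])
    using s1 s2 mm ge0 lesum sum i1 by auto
qed

context prob_space begin

lemma dichot:
  fixes X Y :: "'a \<Rightarrow> real"
  assumes X: "X \<in> borel_measurable M" and Y: "Y \<in> borel_measurable M"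
    and w: "wcomon M \<beta> Y X" and p: "1 - \<beta> \<le> p" "p < 1" "0 < p"
  shows "measure M ({\<omega>\<in>space M. Y \<omega> > q} - Aset M p X) = 0 \<or>
         measure M (Aset M p X - {\<omega>\<in>space M. Y \<omega> > q}) = 0"
proof -
  obtain Y' Z' where Y': "Y' \<in> borel_measurable M" and Z': "Z' \<in> borel_measurable M"
    and aY: "AE \<omega> in M. Y' \<omega> = Y \<omega>" and aZ: "AE \<omega> in M. Z' \<omega> = X \<omega>"
    and cm: "\<And>\<omega> \<omega>'. \<omega> \<in> Aset M p Z' \<Longrightarrow> \<omega>' \<in> space M - Aset M p Z' \<Longrightarrow>
        (Y' \<omega> - Y' \<omega>') * (Z' \<omega> - Z' \<omega>') \<ge> 0"
    using w p unfolding wcomon_def by blast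
  have "\<And>x. measure M {\<omega>\<in>space M. Z' \<omega> \<le> x} = measure M {\<omega>\<in>space M. X \<omega> \<le> x}"
    by (rule measure_eq_AE) (use aZ X Z' in \<open>auto elim: AE_mp\<close>)
  then have V: "VaR M p Z' = VaR M p X" unfolding VaR_def by simp
  let ?D' = "{\<omega>\<in>space M. Y' \<omega> > q}" and ?A' = "Aset M p Z'"
  let ?D = "{\<omega>\<in>space M. Y \<omega> > q}" and ?A = "Aset M p X"
  have sD: "?D \<in> sets M" "?D' \<in> sets M" using Y Y' by measurable
  have sA: "?A \<in> sets M" "?A' \<in> sets M" using Aset_sets X Z' by auto
  have AE1: "AE \<omega> in M. (\<omega> \<in> ?D \<longleftrightarrow> \<omega> \<in> ?D') \<and> (\<omega> \<in> ?A \<longleftrightarrow> \<omega> \<in> ?A')"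
    using aY aZ by eventually_elim (auto simp: Aset_def V)
  have dic: "?D' \<subseteq> ?A' \<or> ?A' \<subseteq> ?D'"
  proof (rule ccontr)
    assume "\<not> ?thesis"
    then obtain \<omega> \<omega>' where w1: "\<omega>' \<in> ?D'" "\<omega>' \<notin> ?A'" "\<omega> \<in> ?A'" "\<omega> \<notin> ?D'" by blast
    then have sp: "\<omega>' \<in> space M" "\<omega> \<in> space M" by (auto simp: Aset_def)
    have "Z' \<omega> > Z' \<omega>'" using w1 sp by (auto simp: Aset_def)
    moreover have "Y' \<omega> < Y' \<omega>'" using w1 sp by auto
    ultimately have "(Y' \<omega> - Y' \<omega>') * (Z' \<omega> - Z' \<omega>') < 0" by (simp add: mult_neg_pos)
    then show False using cm[of \<omega> \<omega>'] w1 sp by auto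
  qed
  show ?thesis
  proof (cases "?D' \<subseteq> ?A'")
    case True
    have "measure M (?D - ?A) = measure M (?D' - ?A')"
      by (rule measure_eq_AE) (use AE1 sD sA in \<open>auto elim: AE_mp\<close>)
    moreover have "?D' - ?A' = {}" using True by blast
    ultimately show ?thesis by simp
  next
    case False
    then have "?A' \<subseteq> ?D'" using dic by auto
    have "measure M (?A - ?D) = measure M (?A' - ?D')"
      by (rule measure_eq_AE) (use AE1 sD sA in \<open>auto elim: AE_mp\<close>)
    moreover have "?A' - ?D' = {}" using \<open>?A' \<subseteq> ?D'\<close> by blast
    ultimately show ?thesis by simp
  qed
qed

end



context prob_space begin

lemma lower_bound:
  fixes X :: "'a \<Rightarrow> real" and Xs :: "nat \<Rightarrow> 'a \<Rightarrow> real"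
  assumes X: "X \<in> borel_measurable M" and c: "cont_distributed M X"
    and n: "n \<ge> 1" and pos: "\<forall>i<n. \<alpha> i > 0" and sum: "(\<Sum>i<n. \<alpha> i) < 1"
    and b: "0 \<le> \<beta>" "\<beta> \<le> 1"
    and Xs: "\<forall>i<n. Xs i \<in> borel_measurable M"
    and ae: "AE \<omega> in M. (\<Sum>i<n. Xs i \<omega>) \<ge> X \<omega>"
    and wc: "\<forall>i<n. wcomon M \<beta> (Xs i) X"
  shows "Qa M (min \<beta> (Max (\<alpha> ` {..<n})) + (\<Sum>i<n. max (\<alpha> i - \<beta>) 0)) X \<le> (\<Sum>i<n. Qa M (\<alpha> i) (Xs i))"
proof (rule ccontr)
  let ?M = "Max (\<alpha> ` {..<n})"
  define \<gamma> where "\<gamma> = min \<beta> ?M + (\<Sum>i<n. max (\<alpha> i - \<beta>) 0)"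
  obtain i1 where i1: "i1 < n" "\<alpha> i1 = ?M" and le: "\<And>i. i < n \<Longrightarrow> \<alpha> i \<le> ?M"
    and lt1: "\<And>i. i < n \<Longrightarrow> \<alpha> i < 1" and Mpos: "0 < ?M" and Mg: "?M \<le> \<gamma>" and g1: "\<gamma> < 1"
    using gamma_facts[OF n pos sum b(1)] unfolding \<gamma>_def by metis
  define q where "q i = Qa M (\<alpha> i) (Xs i)" for i
  define s where "s = (\<Sum>i<n. q i)"
  assume "\<not> Qa M \<gamma> X \<le> (\<Sum>i<n. Qa M (\<alpha> i) (Xs i))"
  then have sl: "s < Qa M \<gamma> X" unfolding s_def q_def \<gamma>_def by simp
  have Pg: "measure M {\<omega>\<in>space M. X \<omega> > s} > \<gamma>" using Qa_gt[OF X _ g1 sl] Mpos Mg by simp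
  define D where "D i = {\<omega>\<in>space M. Xs i \<omega> > q i}" for i
  have Ds: "\<And>i. i < n \<Longrightarrow> D i \<in> sets M"
  proof -
    fix i assume "i < n"
    then have [measurable]: "Xs i \<in> borel_measurable M" using Xs by auto
    show "D i \<in> sets M" unfolding D_def by measurable
  qed
  have PD: "\<And>i. i < n \<Longrightarrow> measure M (D i) \<le> \<alpha> i"
    unfolding D_def q_def using Qa_tail Xs pos lt1 by auto
  have sU: "(\<Union>i<n. D i) \<in> sets M" using Ds by auto
  have sX: "{\<omega>\<in>space M. X \<omega> > s} \<in> sets M" using X by measurable
  have "AE \<omega> in M. \<omega> \<in> {\<omega>\<in>space M. X \<omega> > s} \<longleftrightarrow> \<omega> \<in> {\<omega>\<in>space M. X \<omega> > s} \<inter> (\<Union>i<n. D i)"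
    using ae
  proof eventually_elim
    case (elim \<omega>)
    show ?case
    proof
      assume a: "\<omega> \<in> {\<omega>\<in>space M. X \<omega> > s}"
      have "\<exists>i<n. Xs i \<omega> > q i"
      proof (rule ccontr)
        assume "\<not> ?thesis"
        then have "(\<Sum>i<n. Xs i \<omega>) \<le> s" unfolding s_def by (intro sum_mono) auto
        then show False using a elim by auto
      qed
      then show "\<omega> \<in> {\<omega>\<in>space M. X \<omega> > s} \<inter> (\<Union>i<n. D i)" using a unfolding D_def by auto
    qed auto
  qed
  then have "measure M {\<omega>\<in>space M. X \<omega> > s} = measure M ({\<omega>\<in>space M. X \<omega> > s} \<inter> (\<Union>i<n. D i))"
    by (rule measure_eq_AE) (use sX sU in auto)
  also have "\<dots> \<le> measure M (\<Union>i<n. D i)" using sU by (intro finite_measure_mono) auto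
  finally have PU: "measure M {\<omega>\<in>space M. X \<omega> > s} \<le> measure M (\<Union>i<n. D i)" .
  have key: "\<And>T. T \<in> sets M \<Longrightarrow> measure M (\<Union>i<n. D i) \<le> measure M T + (\<Sum>i<n. measure M (D i - T))"
  proof -
    fix T assume T: "T \<in> sets M"
    have "(\<Union>i<n. D i) \<subseteq> T \<union> (\<Union>i<n. D i - T)" by auto
    then have "measure M (\<Union>i<n. D i) \<le> measure M (T \<union> (\<Union>i<n. D i - T))"
      using T Ds by (intro finite_measure_mono) auto
    also have "\<dots> \<le> measure M T + measure M (\<Union>i<n. D i - T)"
      using T Ds by (intro measure_Un_le) auto
    also have "measure M (\<Union>i<n. D i - T) \<le> (\<Sum>i<n. measure M (D i - T))"
      using T Ds by (intro measure_UNION_le) auto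
    finally show "measure M (\<Union>i<n. D i) \<le> measure M T + (\<Sum>i<n. measure M (D i - T))" by simp
  qed
  show False
  proof (cases "\<beta> \<le> ?M")
    case True
    have b1: "\<beta> < 1" using True lt1[OF i1(1)] i1(2) by linarith
    have gb: "\<gamma> = \<beta> + (\<Sum>i<n. max (\<alpha> i - \<beta>) 0)" unfolding \<gamma>_def using True by simp
    define T where "T = (if \<beta> = 0 then {} else Aset M (1 - \<beta>) X)"
    have Ts: "T \<in> sets M" unfolding T_def using Aset_sets[OF X] by auto
    have PT: "measure M T = \<beta>" unfolding T_def using Aset_measure[OF X c, of "1-\<beta>"] b b1 by auto
    have each: "\<And>i. i < n \<Longrightarrow> measure M (D i - T) \<le> max (\<alpha> i - \<beta>) 0"
    proof -
      fix i assume i: "i < n"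
      show "measure M (D i - T) \<le> max (\<alpha> i - \<beta>) 0"
      proof (cases "\<beta> = 0")
        case True then show ?thesis using PD[OF i] T_def by simp
      next
        case False
        then have TA: "T = Aset M (1 - \<beta>) X" unfolding T_def by simp
        have "measure M (D i - T) = 0 \<or> measure M (T - D i) = 0"
          unfolding TA D_def using dichot[OF X _ _, of "Xs i" \<beta> "1-\<beta>" "q i"] Xs wc i b1 False b by auto
        then show ?thesis
        proof
          assume "measure M (D i - T) = 0" then show ?thesis by simp
        next
          assume z: "measure M (T - D i) = 0"
          have "measure M T = measure M (T \<inter> D i)" using finite_measure_Diff'[OF Ts Ds[OF i]] z by simp
          moreover have "measure M (D i - T) = measure M (D i) - measure M (D i \<inter> T)"
            using finite_measure_Diff'[OF Ds[OF i] Ts] .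
          ultimately show ?thesis using PD[OF i] PT by (simp add: Int_commute)
        qed
      qed
    qed
    have "measure M (\<Union>i<n. D i) \<le> \<beta> + (\<Sum>i<n. max (\<alpha> i - \<beta>) 0)"
      using key[OF Ts] PT sum_mono[of "{..<n}" "\<lambda>i. measure M (D i - T)", OF each] by simp
    then show False using PU Pg gb by simp
  next
    case False
    have gM: "\<gamma> = ?M"
    proof -
      have "(\<Sum>i<n. max (\<alpha> i - \<beta>) 0) = 0" using False le by (intro sum.neutral ballI) (smt (verit) lessThan_iff)
      then show ?thesis unfolding \<gamma>_def using False by simp
    qed
    define m where "m = (?M + min \<beta> (measure M {\<omega>\<in>space M. X \<omega> > s})) / 2"
    have m: "?M < m" "m < \<beta>" "m < measure M {\<omega>\<in>space M. X \<omega> > s}"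
      using False Pg gM unfolding m_def by auto
    define T where "T = Aset M (1 - m) X"
    have Ts: "T \<in> sets M" unfolding T_def using Aset_sets[OF X] by auto
    have PT: "measure M T = m" unfolding T_def using Aset_measure[OF X c, of "1-m"] m b Mpos by auto
    have each: "\<And>i. i < n \<Longrightarrow> measure M (D i - T) = 0"
    proof -
      fix i assume i: "i < n"
      have "measure M (D i - T) = 0 \<or> measure M (T - D i) = 0"
        unfolding T_def D_def using dichot[OF X _ _, of "Xs i" \<beta> "1-m" "q i"] Xs wc i m b Mpos by auto
      then show "measure M (D i - T) = 0"
      proof
        assume z: "measure M (T - D i) = 0"
        have "measure M T = measure M (T \<inter> D i)" using finite_measure_Diff'[OF Ts Ds[OF i]] z by simp
        also have "\<dots> \<le> measure M (D i)" using Ds[OF i] by (intro finite_measure_mono) auto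
        finally have "m \<le> \<alpha> i" using PD[OF i] PT by simp
        then show ?thesis using le[OF i] m by simp
      qed
    qed
    have "measure M (\<Union>i<n. D i) \<le> m" using key[OF Ts] PT each by simp
    then show False using PU m by simp
  qed
qed

end



context prob_space begin

lemma Qa_zero:
  assumes a: "0 < a" "a < 1"
  shows "Qa M a (\<lambda>_. 0) \<le> 0"
proof (rule Qa_le)
  show "1 - a \<le> measure M {\<omega>\<in>space M. (0::real) \<le> 0}" using a prob_space by simp
qed (use a in auto)

lemma upper1:
  fixes X :: "'a \<Rightarrow> real" and n :: nat and \<alpha> :: "nat \<Rightarrow> real"
  assumes X: "X \<in> borel_measurable M"
    and n: "n \<ge> 1" and pos: "\<forall>i<n. \<alpha> i > 0" and sum: "(\<Sum>i<n. \<alpha> i) < 1"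
    and b: "0 \<le> \<beta>" "\<beta> \<le> 1" and bM: "Max (\<alpha> ` {..<n}) \<le> \<beta>"
  shows "\<exists>Xs. (\<forall>i<n. Xs i \<in> borel_measurable M) \<and>
      (AE \<omega> in M. (\<Sum>i<n. Xs i \<omega>) \<ge> X \<omega>) \<and>
      (\<forall>i<n. wcomon M \<beta> (Xs i) X) \<and>
      (\<Sum>i<n. Qa M (\<alpha> i) (Xs i)) \<le> Qa M (min \<beta> (Max (\<alpha> ` {..<n})) + (\<Sum>i<n. max (\<alpha> i - \<beta>) 0)) X"
proof -
  let ?M = "Max (\<alpha> ` {..<n})"
  obtain i1 where i1: "i1 < n" "\<alpha> i1 = ?M" and le: "\<And>i. i < n \<Longrightarrow> \<alpha> i \<le> ?M"
    and lt1: "\<And>i. i < n \<Longrightarrow> \<alpha> i < 1"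
    using gamma_facts[OF n pos sum b(1)] by metis
  have g: "min \<beta> ?M + (\<Sum>i<n. max (\<alpha> i - \<beta>) 0) = \<alpha> i1"
  proof -
    have "(\<Sum>i<n. max (\<alpha> i - \<beta>) 0) = 0" using bM le by (intro sum.neutral ballI) (smt (verit) lessThan_iff)
    then show ?thesis using bM i1 by simp
  qed
  define Xs where "Xs i = (\<lambda>\<omega>. if i = i1 then X \<omega> else (0::real))" for i
  have m: "\<forall>i<n. Xs i \<in> borel_measurable M" unfolding Xs_def using X by auto
  have s: "\<And>\<omega>. (\<Sum>i<n. Xs i \<omega>) = X \<omega>" unfolding Xs_def using i1
    by (simp add: sum.delta')
  have w: "\<forall>i<n. wcomon M \<beta> (Xs i) X"
  proof (intro allI impI)
    fix i assume "i < n"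
    show "wcomon M \<beta> (Xs i) X" unfolding wcomon_def
      by (rule exI[of _ "Xs i"], rule exI[of _ X]) (use m \<open>i<n\<close> X in \<open>auto simp: Xs_def\<close>)
  qed
  have "(\<Sum>i<n. Qa M (\<alpha> i) (Xs i)) \<le> (\<Sum>i<n. if i = i1 then Qa M (\<alpha> i1) X else 0)"
    using Qa_zero pos lt1 by (intro sum_mono) (auto simp: Xs_def)
  also have "\<dots> = Qa M (\<alpha> i1) X" using i1 by (simp add: sum.delta')
  finally show ?thesis using m s w g by (intro exI[of _ Xs]) auto
qed

end



context prob_space begin

lemma upper2:
  fixes X :: "'a \<Rightarrow> real" and n :: nat and \<alpha> :: "nat \<Rightarrow> real"
  assumes X[measurable]: "X \<in> borel_measurable M" and c: "cont_distributed M X"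
    and n: "n \<ge> 1" and pos: "\<forall>i<n. \<alpha> i > 0" and sum: "(\<Sum>i<n. \<alpha> i) < 1"
    and b: "0 \<le> \<beta>" "\<beta> \<le> 1" and bM: "\<beta> < Max (\<alpha> ` {..<n})"
  shows "\<exists>Xs. (\<forall>i<n. Xs i \<in> borel_measurable M) \<and>
      (AE \<omega> in M. (\<Sum>i<n. Xs i \<omega>) \<ge> X \<omega>) \<and>
      (\<forall>i<n. wcomon M \<beta> (Xs i) X) \<and>
      (\<Sum>i<n. Qa M (\<alpha> i) (Xs i)) \<le> Qa M (min \<beta> (Max (\<alpha> ` {..<n})) + (\<Sum>i<n. max (\<alpha> i - \<beta>) 0)) X"
proof -
  let ?M = "Max (\<alpha> ` {..<n})"
  define \<gamma> where "\<gamma> = min \<beta> ?M + (\<Sum>i<n. max (\<alpha> i - \<beta>) 0)"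
  obtain i1 where i1: "i1 < n" "\<alpha> i1 = ?M" and le: "\<And>i. i < n \<Longrightarrow> \<alpha> i \<le> ?M"
    and lt1: "\<And>i. i < n \<Longrightarrow> \<alpha> i < 1" and Mpos: "0 < ?M" and Mg: "?M \<le> \<gamma>" and g1: "\<gamma> < 1"
    using gamma_facts[OF n pos sum b(1)] unfolding \<gamma>_def by metis
  have b1: "\<beta> < 1" using bM lt1[OF i1(1)] i1(2) by linarith
  have gpos: "0 < \<gamma>" using Mpos Mg by simp
  define cc where "cc = Qa M \<gamma> X"
  define W where "W t = (if t \<le> 0 then {} else Aset M (1 - t) X)" for t
  have Ws[measurable]: "\<And>t. W t \<in> sets M" unfolding W_def using Aset_sets[OF X] by auto
  have WP: "\<And>t. 0 \<le> t \<Longrightarrow> t < 1 \<Longrightarrow> measure M (W t) = t"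
    unfolding W_def using Aset_measure[OF X c] by auto
  have Wmono: "\<And>t t'. 0 \<le> t \<Longrightarrow> t \<le> t' \<Longrightarrow> t' < 1 \<Longrightarrow> W t \<subseteq> W t'"
  proof -
    fix t t' :: real assume t: "0 \<le> t" "t \<le> t'" "t' < 1"
    show "W t \<subseteq> W t'"
    proof (cases "t \<le> 0")
      case True then show ?thesis unfolding W_def by simp
    next
      case False
      have "VaR M (1 - t') X \<le> VaR M (1 - t) X" using VaR_mono[OF X, of "1-t'" "1-t"] t False by simp
      then show ?thesis using False t unfolding W_def Aset_def by auto
    qed
  qed
  have Wg: "W \<gamma> = Aset M (1 - \<gamma>) X" unfolding W_def using gpos by simp
  have Vc: "cc \<le> VaR M (1 - \<gamma>) X" unfolding cc_def using Qa_le_VaR[OF X gpos g1] .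
  have Wsub: "W \<gamma> \<subseteq> {\<omega>\<in>space M. X \<omega> > cc}" unfolding Wg Aset_def using Vc by auto
  define N where "N = {\<omega>\<in>space M. X \<omega> > cc} - W \<gamma>"
  have Nnull: "N \<in> null_sets M"
  proof -
    have sC: "{\<omega>\<in>space M. X \<omega> > cc} \<in> sets M" by measurable
    have "{\<omega>\<in>space M. X \<omega> > cc} = space M - {\<omega>\<in>space M. X \<omega> \<le> cc}" by auto
    then have "measure M {\<omega>\<in>space M. X \<omega> > cc} = \<gamma>"
      using Qa_cont[OF X c gpos g1] unfolding cc_def by (simp add: prob_compl)
    then have "measure M N = 0" unfolding N_def
      using finite_measure_Diff[OF sC Ws Wsub] WP[of \<gamma>] gpos g1 by simp
    moreover have "N \<in> sets M" unfolding N_def using sC by auto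
    ultimately show ?thesis by (simp add: emeasure_eq_measure null_setsI)
  qed
  define s where "s k = \<beta> + (\<Sum>j<k. max (\<alpha> j - \<beta>) 0)" for k
  have sSuc: "\<And>k. s (Suc k) = s k + max (\<alpha> k - \<beta>) 0" unfolding s_def by simp
  have sn: "s n = \<gamma>" unfolding s_def \<gamma>_def using bM by simp
  have sge: "\<And>k. \<beta> \<le> s k" unfolding s_def by (simp add: sum_nonneg)
  have sle: "\<And>k. k \<le> n \<Longrightarrow> s k \<le> \<gamma>"
  proof -
    fix k assume "k \<le> n"
    then have "(\<Sum>j<k. max (\<alpha> j - \<beta>) 0) \<le> (\<Sum>j<n. max (\<alpha> j - \<beta>) 0)"
      by (intro sum_mono2) auto
    then show "s k \<le> \<gamma>" using sn unfolding s_def by simp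
  qed
  define band where "band i = W (s (Suc i)) - W (s i)" for i
  define E where "E i = (if \<alpha> i > \<beta> then W \<beta> else {}) \<union> band i" for i
  have Es[measurable]: "\<And>i. E i \<in> sets M" unfolding E_def band_def by auto
  have Pband: "\<And>i. i < n \<Longrightarrow> measure M (band i) = max (\<alpha> i - \<beta>) 0"
  proof -
    fix i assume i: "i < n"
    have r: "0 \<le> s i" "s i \<le> s (Suc i)" "s (Suc i) < 1"
      using sge[of i] b sSuc[of i] sle[of "Suc i"] i g1 by auto
    have "measure M (band i) = s (Suc i) - s i"
      unfolding band_def using finite_measure_Diff[OF Ws Ws Wmono[OF r]] WP r by simp
    then show "measure M (band i) = max (\<alpha> i - \<beta>) 0" using sSuc by simp
  qed
  have PE: "\<And>i. i < n \<Longrightarrow> measure M (E i) \<le> \<alpha> i"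
  proof -
    fix i assume i: "i < n"
    show "measure M (E i) \<le> \<alpha> i"
    proof (cases "\<alpha> i > \<beta>")
      case True
      have "measure M (E i) \<le> measure M (W \<beta>) + measure M (band i)"
        unfolding E_def using True by (simp add: measure_Un_le band_def)
      then show ?thesis using WP[of \<beta>] b b1 Pband[OF i] True by simp
    next
      case False
      have "0 < \<alpha> i" using pos i by simp
      then show ?thesis unfolding E_def using Pband[OF i] False by simp
    qed
  qed
  have cover: "\<And>k. k \<le> n \<Longrightarrow> W (s k) \<subseteq> W \<beta> \<union> (\<Union>i<k. band i)"
  proof -
    fix k show "k \<le> n \<Longrightarrow> W (s k) \<subseteq> W \<beta> \<union> (\<Union>i<k. band i)"
    proof (induction k)
      case 0 then show ?case unfolding s_def by simp
    next
      case (Suc k)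
      then have "W (s k) \<subseteq> W \<beta> \<union> (\<Union>i<k. band i)" by simp
      moreover have "W (s (Suc k)) \<subseteq> W (s k) \<union> band k" unfolding band_def by auto
      ultimately show ?case by (auto simp: lessThan_Suc)
    qed
  qed
  have WgE: "W \<gamma> \<subseteq> (\<Union>i<n. E i)"
  proof -
    have "W \<gamma> \<subseteq> W \<beta> \<union> (\<Union>i<n. band i)" using cover[of n] sn by simp
    moreover have "W \<beta> \<subseteq> E i1" unfolding E_def using bM i1 by auto
    moreover have "\<And>i. band i \<subseteq> E i" unfolding E_def by auto
    ultimately show ?thesis using i1 by blast
  qed
  define Xs where "Xs i = (\<lambda>\<omega>. (if i = i1 then min (X \<omega>) cc else 0) + max (X \<omega> - cc) 0 * indicator (E i) \<omega>)" for i
  have m: "\<forall>i<n. Xs i \<in> borel_measurable M" unfolding Xs_def by measurable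
  have sumXs: "\<And>\<omega>. (\<Sum>i<n. Xs i \<omega>) = min (X \<omega>) cc + (\<Sum>i<n. max (X \<omega> - cc) 0 * indicator (E i) \<omega>)"
    unfolding Xs_def using i1 by (simp add: sum.distrib sum.delta')
  have ae: "AE \<omega> in M. (\<Sum>i<n. Xs i \<omega>) \<ge> X \<omega>"
    using AE_not_in[OF Nnull] AE_space
  proof eventually_elim
    case (elim \<omega>)
    have nn: "\<And>i. 0 \<le> max (X \<omega> - cc) 0 * indicator (E i) \<omega>" by simp
    show ?case
    proof (cases "X \<omega> > cc")
      case False
      then show ?thesis unfolding sumXs using sum_nonneg[of "{..<n}", OF nn] by simp
    next
      case True
      then have "\<omega> \<in> W \<gamma>" using elim unfolding N_def by auto
      then obtain j where j: "j < n" "\<omega> \<in> E j" using WgE by auto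
      have "max (X \<omega> - cc) 0 * indicator (E j) \<omega> \<le> (\<Sum>i<n. max (X \<omega> - cc) 0 * indicator (E i) \<omega>)"
        using j nn by (intro member_le_sum) auto
      moreover have "X \<omega> = min (X \<omega>) cc + max (X \<omega> - cc) 0 * indicator (E j) \<omega>" using j True by simp
      ultimately show ?thesis unfolding sumXs by linarith
    qed
  qed
  have Qb: "\<And>i. i < n \<Longrightarrow> Qa M (\<alpha> i) (Xs i) \<le> (if i = i1 then cc else 0)"
  proof -
    fix i assume i: "i < n"
    have mi: "Xs i \<in> borel_measurable M" using m i by auto
    have sub: "space M - E i \<subseteq> {\<omega>\<in>space M. Xs i \<omega> \<le> (if i = i1 then cc else 0)}"
      unfolding Xs_def by auto
    have "1 - \<alpha> i \<le> 1 - measure M (E i)" using PE[OF i] by simp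
    also have "\<dots> = measure M (space M - E i)" by (simp add: prob_compl)
    also have "\<dots> \<le> measure M {\<omega>\<in>space M. Xs i \<omega> \<le> (if i = i1 then cc else 0)}"
      using sub mi by (intro finite_measure_mono) auto
    finally show "Qa M (\<alpha> i) (Xs i) \<le> (if i = i1 then cc else 0)"
      using Qa_le[OF mi] pos lt1 i by auto
  qed
  have Qsum: "(\<Sum>i<n. Qa M (\<alpha> i) (Xs i)) \<le> cc"
  proof -
    have "(\<Sum>i<n. Qa M (\<alpha> i) (Xs i)) \<le> (\<Sum>i<n. if i = i1 then cc else 0)"
      using Qb by (intro sum_mono) auto
    also have "\<dots> = cc" using i1 by (simp add: sum.delta')
    finally show ?thesis .
  qed
  have w: "\<forall>i<n. wcomon M \<beta> (Xs i) X"
  proof (intro allI impI)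
    fix i assume i: "i < n"
    have mi: "Xs i \<in> borel_measurable M" using m i by auto
    have "\<forall>p. 1 - \<beta> \<le> p \<and> p < 1 \<longrightarrow>
         (\<forall>\<omega>\<in>Aset M p X. \<forall>\<omega>'\<in>space M - Aset M p X. (Xs i \<omega> - Xs i \<omega>') * (X \<omega> - X \<omega>') \<ge> 0)"
    proof (intro allI impI ballI)
      fix p \<omega> \<omega>' assume p: "1 - \<beta> \<le> p \<and> p < 1" and om: "\<omega> \<in> Aset M p X" and om': "\<omega>' \<in> space M - Aset M p X"
      have p0: "0 < p" using p b1 by simp
      have "Aset M p X = W (1 - p)" unfolding W_def using p by simp
      also have "\<dots> \<subseteq> W \<beta>" using Wmono[of "1-p" \<beta>] p b1 by simp
      finally have omW: "\<omega> \<in> W \<beta>" using om by auto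
      have Xlt: "X \<omega>' < X \<omega>" using om om' unfolding Aset_def by auto
      have mono: "Xs i \<omega>' \<le> Xs i \<omega>"
      proof (cases "\<alpha> i > \<beta>")
        case True
        then have "\<omega> \<in> E i" using omW unfolding E_def by auto
        then have "Xs i \<omega> = (if i = i1 then min (X \<omega>) cc else 0) + max (X \<omega> - cc) 0"
          unfolding Xs_def by simp
        moreover have "Xs i \<omega>' \<le> (if i = i1 then min (X \<omega>') cc else 0) + max (X \<omega>' - cc) 0"
          unfolding Xs_def by (simp add: indicator_def)
        moreover have "min (X \<omega>') cc \<le> min (X \<omega>) cc" "max (X \<omega>' - cc) 0 \<le> max (X \<omega> - cc) 0"
          using Xlt by auto
        ultimately show ?thesis by auto
      next
        case False
        then have "i \<noteq> i1" using bM i1 by auto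
        have "band i = {}" unfolding band_def using sSuc[of i] False by simp
        then have "E i = {}" unfolding E_def using False by simp
        then show ?thesis unfolding Xs_def using \<open>i \<noteq> i1\<close> by simp
      qed
      then show "(Xs i \<omega> - Xs i \<omega>') * (X \<omega> - X \<omega>') \<ge> 0" using Xlt by simp
    qed
    then show "wcomon M \<beta> (Xs i) X" unfolding wcomon_def
      by (intro exI[of _ "Xs i"] exI[of _ X]) (use mi X in auto)
  qed
  show ?thesis using m ae w Qsum unfolding cc_def \<gamma>_def by (intro exI[of _ Xs]) auto
qed

end


theorem theorem6p1:
  fixes M :: "'a measure" and X :: "'a \<Rightarrow> real" and n :: nat
    and \<alpha> :: "nat \<Rightarrow> real" and \<beta> :: real
  assumes "prob_space M" and "atomless M"
    and "X \<in> borel_measurable M" and "cont_distributed M X"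
    and "n \<ge> 1" and "\<forall>i<n. \<alpha> i > 0" and "(\<Sum>i<n. \<alpha> i) < 1"
    and "0 \<le> \<beta>" and "\<beta> \<le> 1"
  shows "Vbeta M n \<alpha> \<beta> X =
    ereal (Qa M (min \<beta> (Max (\<alpha> ` {..<n})) + (\<Sum>i<n. max (\<alpha> i - \<beta>) 0)) X)"
proof -
  interpret P: prob_space M by (rule assms(1))
  let ?c = "Qa M (min \<beta> (Max (\<alpha> ` {..<n})) + (\<Sum>i<n. max (\<alpha> i - \<beta>) 0)) X"
  let ?S = "{ereal (\<Sum>i<n. Qa M (\<alpha> i) (Xs i)) | Xs.
      (\<forall>i<n. Xs i \<in> borel_measurable M) \<and>
      (AE \<omega> in M. (\<Sum>i<n. Xs i \<omega>) \<ge> X \<omega>) \<and>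
      (\<forall>i<n. wcomon M \<beta> (Xs i) X)}"
  have lo: "ereal ?c \<le> Inf ?S"
  proof (rule Inf_greatest)
    fix e assume "e \<in> ?S"
    then obtain Xs where e: "e = ereal (\<Sum>i<n. Qa M (\<alpha> i) (Xs i))"
      and h: "\<forall>i<n. Xs i \<in> borel_measurable M" "AE \<omega> in M. (\<Sum>i<n. Xs i \<omega>) \<ge> X \<omega>"
        "\<forall>i<n. wcomon M \<beta> (Xs i) X" by blast
    show "ereal ?c \<le> e" unfolding e
      using P.lower_bound[OF assms(3,4,5,6,7,8,9) h] by simp
  qed
  obtain Xs where h: "\<forall>i<n. Xs i \<in> borel_measurable M" "AE \<omega> in M. (\<Sum>i<n. Xs i \<omega>) \<ge> X \<omega>"
        "\<forall>i<n. wcomon M \<beta> (Xs i) X" and q: "(\<Sum>i<n. Qa M (\<alpha> i) (Xs i)) \<le> ?c"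
  proof (cases "Max (\<alpha> ` {..<n}) \<le> \<beta>")
    case True then show ?thesis using P.upper1[OF assms(3,5,6,7,8,9) True] that by blast
  next
    case False then show ?thesis using P.upper2[OF assms(3,4,5,6,7,8,9)] that by (meson not_le)
  qed
  have "Inf ?S \<le> ereal (\<Sum>i<n. Qa M (\<alpha> i) (Xs i))" using h by (intro Inf_lower) blast
  also have "\<dots> \<le> ereal ?c" using q by simp
  finally show ?thesis using lo unfolding Vbeta_def by (intro antisym) auto
qed

end
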